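(* Let $k\ge1$ (possibly $k=\infty$), let $n_i$ ($1\le i\le k$) be positive integers, and let $\mathbb F_\theta^+$ be the single-vertex $k$-graph underlying the standard product of the odometers $\{(\mathbb Z,[n_i])\}_{i=1}^k$. The following are equivalent: (1) the $n_i$ are pairwise coprime; (2) for all $1\le i<j\le k$ and $(\mathfrak s,\mathfrak t')\in[n_i]\times[n_j]$ there is a unique $(\mathfrak s',\mathfrak t)\in[n_i]\times[n_j]$ with $x^i_{\mathfrak s}x^j_{\mathfrak t}=x^j_{\mathfrak t'}x^i_{\mathfrak s'}$; (3) any two $\mu,\nu\in\mathbb F_\theta^+$ having a right common multiple have a unique right least common multiple, and it has degree $d(\mu)\vee d(\nu)$; (4) $\mathbb F_\theta^+$ is right LCM.
   Context: $[m]=\{0,\dots,m-1\}$. $\mathbb F_\theta^+$ is the monoid generated by $x^i_{\mathfrak s}$ ($1\le i\le k$, $\mathfrak s\in[n_i]$) subject to $x^i_{\mathfrak s}x^j_{\mathfrak t}=x^j_{\mathfrak t'}x^i_{\mathfrak s'}$ for $i<j$ whenever $\mathfrak s+\mathfrak tn_i=\mathfrak t'+\mathfrak s'n_j$ ($\mathfrak s,\mathfrak s'\in[n_i]$, $\mathfrak t,\mathfrak t'\in[n_j]$); it is a single-vertex $k$-graph with degree map $d(x^i_{\mathfrak s})=e_i\in\mathbb N^k$ (unique factorization holds). $p$ is a right multiple of $q$ if $p=qr$ for some $r$; a monoid is right LCM if any two elements having a right common multiple have a right least common multiple (a common right multiple of which every common right multiple is a right multiple). *)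

theory Defs
  imports Main "HOL-Library.Extended_Nat"
begin

definition color :: "enat \<Rightarrow> nat \<Rightarrow> bool" where
  "color k i \<longleftrightarrow> 1 \<le> i \<and> enat i \<le> k"

text \<open>A generator x^i_s is encoded as the pair (i, s); words are lists of generators.\<close>
definition valid_word :: "enat \<Rightarrow> (nat \<Rightarrow> nat) \<Rightarrow> (nat \<times> nat) list \<Rightarrow> bool" where
  "valid_word k n w \<longleftrightarrow> (\<forall>(i, s) \<in> set w. color k i \<and> s < n i)"

definition basic_rel :: "enat \<Rightarrow> (nat \<Rightarrow> nat) \<Rightarrow> (nat \<times> nat) list \<Rightarrow> (nat \<times> nat) list \<Rightarrow> bool" where
  "basic_rel k n a b \<longleftrightarrow> (\<exists>i j s t t' s'. color k i \<and> color k j \<and> i < j \<and>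
      s < n i \<and> t < n j \<and> t' < n j \<and> s' < n i \<and> s + t * n i = t' + s' * n j \<and>
      a = [(i, s), (j, t)] \<and> b = [(j, t'), (i, s')])"

text \<open>Equality in the monoid F_theta^+: the congruence on words generated by the relations.\<close>
inductive Feq :: "enat \<Rightarrow> (nat \<Rightarrow> nat) \<Rightarrow> (nat \<times> nat) list \<Rightarrow> (nat \<times> nat) list \<Rightarrow> bool"
  for k n where
  Feq_refl: "Feq k n w w"
| Feq_sym: "Feq k n u w \<Longrightarrow> Feq k n w u"
| Feq_trans: "Feq k n u v \<Longrightarrow> Feq k n v w \<Longrightarrow> Feq k n u w"
| Feq_step: "basic_rel k n a b \<Longrightarrow> Feq k n (u @ a @ v) (u @ b @ v)"

definition deg :: "(nat \<times> nat) list \<Rightarrow> nat \<Rightarrow> nat" where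
  "deg w = (\<lambda>i. length (filter (\<lambda>g. fst g = i) w))"

definition right_mult :: "enat \<Rightarrow> (nat \<Rightarrow> nat) \<Rightarrow> (nat \<times> nat) list \<Rightarrow> (nat \<times> nat) list \<Rightarrow> bool" where
  "right_mult k n p q \<longleftrightarrow> (\<exists>r. valid_word k n r \<and> Feq k n p (q @ r))"

definition common_right_mult :: "enat \<Rightarrow> (nat \<Rightarrow> nat) \<Rightarrow> (nat \<times> nat) list \<Rightarrow> (nat \<times> nat) list \<Rightarrow> (nat \<times> nat) list \<Rightarrow> bool" where
  "common_right_mult k n c p q \<longleftrightarrow> valid_word k n c \<and> right_mult k n c p \<and> right_mult k n c q"

definition is_right_lcm :: "enat \<Rightarrow> (nat \<Rightarrow> nat) \<Rightarrow> (nat \<times> nat) list \<Rightarrow> (nat \<times> nat) list \<Rightarrow> (nat \<times> nat) list \<Rightarrow> bool" where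
  "is_right_lcm k n l p q \<longleftrightarrow> common_right_mult k n l p q \<and>
     (\<forall>c. common_right_mult k n c p q \<longrightarrow> right_mult k n c l)"

definition right_LCM_monoid :: "enat \<Rightarrow> (nat \<Rightarrow> nat) \<Rightarrow> bool" where
  "right_LCM_monoid k n \<longleftrightarrow> (\<forall>p q. valid_word k n p \<and> valid_word k n q \<and>
      (\<exists>c. common_right_mult k n c p q) \<longrightarrow> (\<exists>l. is_right_lcm k n l p q))"

end

theory Submission
  imports Defs "HOL-Number_Theory.Cong"
begin

fun wval :: "(nat \<Rightarrow> nat) \<Rightarrow> (nat \<times> nat) list \<Rightarrow> nat" where
  "wval n [] = 0"
| "wval n ((i,s)#w) = s + n i * wval n w"

definition wN :: "(nat \<Rightarrow> nat) \<Rightarrow> (nat \<times> nat) list \<Rightarrow> nat" where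
  "wN n w = prod_list (map (\<lambda>g. n (fst g)) w)"

lemma deg_Nil[simp]: "deg [] = (\<lambda>_. 0)" by (simp add: deg_def)
lemma deg_Cons: "deg (a#w) = (\<lambda>i. (if fst a = i then 1 else 0) + deg w i)"
  by (auto simp: deg_def)
lemma deg_append: "deg (u@v) = (\<lambda>i. deg u i + deg v i)"
  by (simp add: deg_def)

lemma wN_Nil[simp]: "wN n [] = 1" by (simp add: wN_def)
lemma wN_Cons[simp]: "wN n (a#w) = n (fst a) * wN n w" by (simp add: wN_def)
lemma wN_append: "wN n (u@v) = wN n u * wN n v" by (simp add: wN_def)

lemma wval_append: "wval n (u@v) = wval n u + wN n u * wval n v"
  by (induction u) (auto simp: algebra_simps)

lemma valid_append: "valid_word k n (u@v) \<longleftrightarrow> valid_word k n u \<and> valid_word k n v"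
  by (auto simp: valid_word_def)
lemma valid_Cons: "valid_word k n ((i,s)#v) \<longleftrightarrow> color k i \<and> s < n i \<and> valid_word k n v"
  by (auto simp: valid_word_def)
lemma valid_Nil[simp]: "valid_word k n []"
  by (auto simp: valid_word_def)

lemma Feq_inv: "Feq k n u v \<Longrightarrow> deg u = deg v \<and> wval n u = wval n v \<and> wN n u = wN n v
   \<and> (valid_word k n u \<longleftrightarrow> valid_word k n v) \<and> length u = length v"
proof (induction rule: Feq.induct)
  case (Feq_step a b u v)
  then obtain i j s t t' s' where h: "color k i" "color k j" "i < j"
      "s < n i" "t < n j" "t' < n j" "s' < n i" "s + t * n i = t' + s' * n j"
      "a = [(i, s), (j, t)]" "b = [(j, t'), (i, s')]"
    by (auto simp: basic_rel_def)
  have "wval n a = wval n b" using h by (simp add: algebra_simps)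
  moreover have "wN n a = wN n b" using h by simp
  moreover have "deg a = deg b" using h by (auto simp: deg_def)
  moreover have "length a = length b" using h by simp
  moreover have "valid_word k n a" "valid_word k n b" using h by (auto simp: valid_word_def)
  ultimately show ?case
    by (simp add: wval_append wN_append deg_append valid_append)
qed auto

lemma Feq_cong: "Feq k n u v \<Longrightarrow> Feq k n (p@u@q) (p@v@q)"
proof (induction rule: Feq.induct)
  case (Feq_step a b u v)
  then have "Feq k n ((p@u)@a@(v@q)) ((p@u)@b@(v@q))" by (rule Feq.Feq_step)
  then show ?case by simp
qed (auto intro: Feq.intros)

lemma Feq_cons: "Feq k n u v \<Longrightarrow> Feq k n (a#u) (a#v)"
  using Feq_cong[of k n u v "[a]" "[]"] by simp
lemma Feq_app: "Feq k n u v \<Longrightarrow> Feq k n (u@q) (v@q)"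
  using Feq_cong[of k n u v "[]" q] by simp
lemma Feq_prep: "Feq k n u v \<Longrightarrow> Feq k n (p@u) (p@v)"
  using Feq_cong[of k n u v p "[]"] by simp

lemma wval_lt: "\<forall>(i,s)\<in>set w. s < n i \<Longrightarrow> wval n w < wN n w"
proof (induction w)
  case (Cons a w)
  obtain i s where a: "a = (i,s)" by force
  have "s < n i" "wval n w < wN n w" using Cons a by auto
  then have "s + n i * wval n w < n i + n i * wval n w" by simp
  also have "\<dots> = n i * (wval n w + 1)" by (simp add: algebra_simps)
  also have "\<dots> \<le> n i * wN n w" using \<open>wval n w < wN n w\<close> by (intro mult_le_mono2) simp
  finally show ?case using a by simp
qed simp

lemma wN_prod: "finite S \<Longrightarrow> fst ` set w \<subseteq> S \<Longrightarrow> wN n w = (\<Prod>i\<in>S. n i ^ deg w i)"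
proof (induction w)
  case Nil then show ?case by simp
next
  case (Cons a w)
  have "(\<Prod>i\<in>S. n i ^ deg (a#w) i) = (\<Prod>i\<in>S. n i ^ (if fst a = i then 1 else 0) * n i ^ deg w i)"
    by (simp add: deg_Cons power_add)
  also have "\<dots> = (\<Prod>i\<in>S. n i ^ (if fst a = i then 1 else 0)) * (\<Prod>i\<in>S. n i ^ deg w i)"
    by (rule prod.distrib)
  also have "(\<Prod>i\<in>S. n i ^ (if fst a = i then 1 else 0)) = (\<Prod>i\<in>S. if i = fst a then n i else 1)"
    by (rule prod.cong) auto
  also have "\<dots> = n (fst a)" using Cons.prems by (simp add: prod.delta)
  finally show ?case using Cons by simp
qed

lemma deg_wN: "deg u = deg v \<Longrightarrow> wN n u = wN n v"
  using wN_prod[of "fst ` set u \<union> fst ` set v" u n] wN_prod[of "fst ` set u \<union> fst ` set v" v n]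
  by simp

locale odo =
  fixes k :: enat and n :: "nat \<Rightarrow> nat"
  assumes pos: "\<And>i. color k i \<Longrightarrow> 0 < n i"
begin

lemma swap_aux:
  assumes "color k i" "color k j" "i < j" "t' < n j" "s' < n i"
  shows "\<exists>s t. s < n i \<and> t < n j \<and> Feq k n [(i, s), (j, t)] [(j, t'), (i, s')]"
proof -
  define z where "z = t' + s' * n j"
  have ni: "0 < n i" and nj: "0 < n j" using assms pos by auto
  have "z < n j + s' * n j" using assms by (simp add: z_def)
  also have "\<dots> = (s' + 1) * n j" by simp
  also have "\<dots> \<le> n i * n j" using assms by (intro mult_le_mono1) simp
  finally have zl: "z < n i * n j" .
  have "z div n i < n j" using zl ni by (simp add: less_mult_imp_div_less mult.commute)
  moreover have "z mod n i < n i" using ni by simp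
  moreover have "basic_rel k n [(i, z mod n i), (j, z div n i)] [(j, t'), (i, s')]"
    unfolding basic_rel_def using assms \<open>z div n i < n j\<close> ni
    by (auto simp: z_def [symmetric])
  ultimately show ?thesis using Feq_step[of k n _ _ "[]" "[]"] by fastforce
qed

lemma swap:
  assumes "color k a" "color k b" "a \<noteq> b" "x < n a" "y < n b"
  shows "\<exists>y' x'. y' < n b \<and> x' < n a \<and> Feq k n [(a, x), (b, y)] [(b, y'), (a, x')]"
proof (cases "a < b")
  case True
  define z where "z = x + y * n a"
  have na: "0 < n a" and nb: "0 < n b" using assms pos by auto
  have "z < n a + y * n a" using assms by (simp add: z_def)
  also have "\<dots> = (y + 1) * n a" by simp
  also have "\<dots> \<le> n b * n a" using assms by (intro mult_le_mono1) simp
  finally have zl: "z < n b * n a" .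
  have "z div n b < n a" using zl nb by (simp add: less_mult_imp_div_less mult.commute)
  moreover have "z mod n b < n b" using nb by simp
  moreover have "basic_rel k n [(a, x), (b, y)] [(b, z mod n b), (a, z div n b)]"
    unfolding basic_rel_def using assms True \<open>z div n b < n a\<close> nb
    by (auto simp: z_def [symmetric])
  ultimately show ?thesis using Feq_step[of k n _ _ "[]" "[]"] by fastforce
next
  case False
  then have "b < a" using assms by simp
  then obtain s t where "s < n b" "t < n a" "Feq k n [(b, s), (a, t)] [(a, x), (b, y)]"
    using swap_aux[of b a x y] assms by blast
  then show ?thesis by (blast intro: Feq_sym)
qed

lemma move_front:
  assumes "valid_word k n v" "(i, x) \<in> set v"
  shows "\<exists>x' v'. x' < n i \<and> valid_word k n v' \<and> Feq k n v ((i, x')#v')"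
  using assms
proof (induction v)
  case Nil then show ?case by simp
next
  case (Cons a v)
  obtain c y where a: "a = (c, y)" by force
  show ?case
  proof (cases "c = i")
    case True
    then show ?thesis using Cons.prems a by (auto simp: valid_Cons intro: Feq_refl)
  next
    case False
    then have "(i, x) \<in> set v" using Cons.prems a by auto
    moreover have vv: "valid_word k n v" and cc: "color k c" "y < n c" using Cons.prems a by (auto simp: valid_Cons)
    ultimately obtain x' v' where h: "x' < n i" "valid_word k n v'" "Feq k n v ((i, x')#v')"
      using Cons.IH by blast
    have ci: "color k i" using Cons.prems by (auto simp: valid_word_def)
    obtain y' x'' where h2: "y' < n i" "x'' < n c" "Feq k n [(c, y), (i, x')] [(i, y'), (c, x'')]"
      using swap[OF cc(1) ci False cc(2) h(1)] by blast
    have "Feq k n (a#v) ((c,y)#(i,x')#v')" using a Feq_cons[OF h(3)] by simp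
    moreover have "Feq k n ((c,y)#(i,x')#v') ((i, y')#(c, x'')#v')"
      using Feq_app[OF h2(3), of v'] by simp
    ultimately have "Feq k n (a#v) ((i, y')#(c, x'')#v')" by (rule Feq_trans)
    moreover have "valid_word k n ((c, x'')#v')" using h h2 cc by (simp add: valid_Cons)
    ultimately show ?thesis using h2 by blast
  qed
qed

lemma complete:
  assumes "valid_word k n u" "valid_word k n v" "deg u = deg v" "wval n u = wval n v"
  shows "Feq k n u v"
  using assms
proof (induction u arbitrary: v)
  case Nil
  have "v = []"
  proof (cases v)
    case (Cons b l)
    then have "deg v (fst b) > 0" by (simp add: deg_Cons)
    with Nil show ?thesis by (metis deg_Nil less_irrefl)
  qed simp
  then show ?case by (simp add: Feq_refl)
next
  case (Cons a u)
  obtain i s where a: "a = (i, s)" by force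
  have "deg (a#u) i = deg v i" using Cons.prems(3) by simp
  then have "deg v i = 1 + deg u i" using a by (simp add: deg_Cons)
  then have "deg v i > 0" by simp
  then obtain x where "(i, x) \<in> set v"
    by (auto simp: deg_def filter_empty_conv)
  then obtain x' v' where h: "x' < n i" "valid_word k n v'" "Feq k n v ((i, x')#v')"
    using move_front Cons.prems by blast
  have inv: "deg v = deg ((i, x')#v')" "wval n v = wval n ((i, x')#v')" using Feq_inv[OF h(3)] by auto
  have su: "s < n i" "valid_word k n u" "color k i" using Cons.prems a by (auto simp: valid_Cons)
  have eq: "s + n i * wval n u = x' + n i * wval n v'" using inv Cons.prems a by simp
  have "(s + n i * wval n u) mod n i = (x' + n i * wval n v') mod n i" using eq by simp
  then have "s = x'" using su h by simp
  then have "wval n u = wval n v'" using eq pos[OF su(3)] by simp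
  moreover have "deg u = deg v'" using inv Cons.prems a \<open>s = x'\<close>
    by (auto simp: deg_Cons fun_eq_iff)
  ultimately have "Feq k n u v'" using Cons.IH su h by blast
  then have "Feq k n (a#u) ((i, x')#v')" using Feq_cons a \<open>s = x'\<close> by blast
  then show ?case using h(3) by (blast intro: Feq_sym Feq_trans)
qed

lemma valid_lt: "valid_word k n w \<Longrightarrow> wval n w < wN n w"
  by (rule wval_lt) (auto simp: valid_word_def)

lemma factor:
  assumes "valid_word k n p" "\<forall>i. d i \<le> deg p i"
  shows "\<exists>q r. valid_word k n q \<and> valid_word k n r \<and> deg q = d \<and> Feq k n p (q@r)"
  using assms
proof (induction "length p" arbitrary: p d rule: less_induct)
  case less
  show ?case
  proof (cases "\<forall>i. d i = 0")
    case True
    then have "deg [] = d" by (auto simp: fun_eq_iff)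
    then show ?thesis using less.prems by (metis append_Nil Feq_refl valid_Nil)
  next
    case False
    then obtain i where di: "d i > 0" by auto
    then have "deg p i > 0" using less.prems(2) by (metis gr0I le_zero_eq)
    then obtain x where ix: "(i, x) \<in> set p"
      by (auto simp: deg_def filter_empty_conv)
    then obtain x' p' where h: "x' < n i" "valid_word k n p'" "Feq k n p ((i, x')#p')"
      using move_front less.prems by blast
    have ci: "color k i" using ix less.prems(1) by (auto simp: valid_word_def)
    have inv: "deg p = deg ((i, x')#p')" "length p = Suc (length p')"
      using Feq_inv[OF h(3)] by auto
    define d' where "d' = d(i := d i - 1)"
    have "\<forall>j. d' j \<le> deg p' j"
    proof
      fix j
      have "d j \<le> deg ((i, x')#p') j" using less.prems(2) inv by metis
      then show "d' j \<le> deg p' j" by (auto simp: d'_def deg_Cons)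
    qed
    then obtain q r where q: "valid_word k n q" "valid_word k n r" "deg q = d'" "Feq k n p' (q@r)"
      using less.hyps[of p' d'] inv h by auto
    have "deg ((i, x')#q) = d" using q(3) di by (auto simp: deg_Cons d'_def fun_eq_iff)
    moreover have "valid_word k n ((i, x')#q)"
      using q h ci by (simp add: valid_Cons)
    moreover have "Feq k n p ((i, x')#q @ r)"
      using h(3) Feq_cons[OF q(4)] by (blast intro: Feq_trans)
    ultimately show ?thesis using q by (metis append_Cons)
  qed
qed

lemma RM:
  assumes "valid_word k n p" "valid_word k n q"
  shows "right_mult k n p q \<longleftrightarrow> (\<forall>i. deg q i \<le> deg p i) \<and> wval n p mod wN n q = wval n q"
proof
  assume "right_mult k n p q"
  then obtain r where r: "valid_word k n r" "Feq k n p (q@r)" by (auto simp: right_mult_def)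
  have "deg p = deg (q@r)" "wval n p = wval n (q@r)" using Feq_inv[OF r(2)] by auto
  then show "(\<forall>i. deg q i \<le> deg p i) \<and> wval n p mod wN n q = wval n q"
    using valid_lt[OF assms(2)] by (simp add: deg_append wval_append)
next
  assume h: "(\<forall>i. deg q i \<le> deg p i) \<and> wval n p mod wN n q = wval n q"
  then obtain q' r where f: "valid_word k n q'" "valid_word k n r" "deg q' = deg q" "Feq k n p (q'@r)"
    using factor[OF assms(1)] by blast
  have "wval n p = wval n q' + wN n q' * wval n r" using Feq_inv[OF f(4)] by (simp add: wval_append)
  moreover have "wN n q' = wN n q" using f(3) by (rule deg_wN)
  ultimately have "wval n p mod wN n q = wval n q'" using valid_lt[OF f(1)] by simp
  then have "wval n q' = wval n q" using h by simp
  then have "Feq k n q' q" using complete f assms by blast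
  then have "Feq k n p (q@r)" using f(4) Feq_app by (blast intro: Feq_trans)
  then show "right_mult k n p q" using f by (auto simp: right_mult_def)
qed

lemma deg_dvd:
  assumes "\<forall>i. deg u i \<le> deg v i"
  shows "wN n u dvd wN n v"
proof -
  let ?S = "fst ` set u \<union> fst ` set v"
  have "wN n u = (\<Prod>i\<in>?S. n i ^ deg u i)" by (rule wN_prod) auto
  moreover have "wN n v = (\<Prod>i\<in>?S. n i ^ deg v i)" by (rule wN_prod) auto
  ultimately show ?thesis using assms by (auto intro!: prod_dvd_prod le_imp_power_dvd)
qed

lemma feq2:
  assumes "color k i" "color k j" "s < n i" "t < n j" "t' < n j" "s' < n i"
  shows "Feq k n [(i, s), (j, t)] [(j, t'), (i, s')] \<longleftrightarrow> s + n i * t = t' + n j * s'"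
proof
  assume "Feq k n [(i, s), (j, t)] [(j, t'), (i, s')]"
  from Feq_inv[OF this] show "s + n i * t = t' + n j * s'" by simp
next
  assume "s + n i * t = t' + n j * s'"
  moreover have "deg [(i, s), (j, t)] = deg [(j, t'), (i, s')]" by (auto simp: deg_Cons)
  ultimately show "Feq k n [(i, s), (j, t)] [(j, t'), (i, s')]"
    using assms by (intro complete) (auto simp: valid_Cons)
qed

lemma P1_P2:
  assumes "\<forall>i j. color k i \<and> color k j \<and> i \<noteq> j \<longrightarrow> coprime (n i) (n j)"
  shows "\<forall>i j s t'. color k i \<and> color k j \<and> i < j \<and> s < n i \<and> t' < n j \<longrightarrow>
               (\<exists>!st. fst st < n i \<and> snd st < n j \<and>
                  Feq k n [(i, s), (j, snd st)] [(j, t'), (i, fst st)])"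
proof (intro allI impI)
  fix i j s t'
  assume h: "color k i \<and> color k j \<and> i < j \<and> s < n i \<and> t' < n j"
  then have cop: "coprime (n i) (n j)" using assms by auto
  have ni: "n i > 0" and nj: "n j > 0" using h pos by auto
  define f where "f t = (s + n i * t) mod n j" for t
  have inj: "inj_on f {..<n j}"
  proof (rule inj_onI)
    fix t1 t2 assume "t1 \<in> {..<n j}" "t2 \<in> {..<n j}" "f t1 = f t2"
    then have "[s + n i * t1 = s + n i * t2] (mod n j)" by (simp add: f_def cong_def)
    then have "[n i * t1 = n i * t2] (mod n j)" by (simp add: cong_add_lcancel_nat)
    then have "[t1 = t2] (mod n j)" using cop by (simp add: cong_mult_lcancel_nat)
    then show "t1 = t2" using \<open>t1 \<in> _\<close> \<open>t2 \<in> _\<close> by (auto intro: cong_less_imp_eq_nat)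
  qed
  have "f ` {..<n j} \<subseteq> {..<n j}" using nj by (auto simp: f_def)
  then have surj: "f ` {..<n j} = {..<n j}" using inj by (intro endo_inj_surj) auto
  then obtain t where t: "t < n j" "f t = t'" using h by (metis imageE lessThan_iff)
  define s' where "s' = (s + n i * t) div n j"
  have eq: "s + n i * t = t' + n j * s'" using t unfolding s'_def f_def
    by (metis mod_mult_div_eq add.commute)
  have "s + n i * t < n i + n i * t" using h by simp
  also have "\<dots> = n i * (t + 1)" by simp
  also have "\<dots> \<le> n i * n j" using t by (intro mult_le_mono2) simp
  finally have "s' < n i" using nj by (simp add: s'_def less_mult_imp_div_less mult.commute)
  have ex: "fst (s', t) < n i \<and> snd (s', t) < n j \<and> Feq k n [(i, s), (j, snd (s', t))] [(j, t'), (i, fst (s', t))]"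
    using feq2 h t \<open>s' < n i\<close> eq by simp
  show "\<exists>!st. fst st < n i \<and> snd st < n j \<and> Feq k n [(i, s), (j, snd st)] [(j, t'), (i, fst st)]"
  proof (rule ex1I[of _ "(s', t)"])
    show "fst (s', t) < n i \<and> snd (s', t) < n j \<and> Feq k n [(i, s), (j, snd (s', t))] [(j, t'), (i, fst (s', t))]"
      by (rule ex)
  next
    fix st assume st: "fst st < n i \<and> snd st < n j \<and> Feq k n [(i, s), (j, snd st)] [(j, t'), (i, fst st)]"
    then have eq2: "s + n i * snd st = t' + n j * fst st" using feq2 h by blast
    then have "f (snd st) = t'" using h by (simp add: f_def)
    then have "snd st = t" using inj t st by (auto dest: inj_onD)
    then have "fst st = s'" using eq eq2 nj by simp
    then show "st = (s', t)" using \<open>snd st = t\<close> by (simp add: prod_eq_iff)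
  qed
qed

lemma P2_P1:
  assumes P2: "\<forall>i j s t'. color k i \<and> color k j \<and> i < j \<and> s < n i \<and> t' < n j \<longrightarrow>
               (\<exists>!st. fst st < n i \<and> snd st < n j \<and>
                  Feq k n [(i, s), (j, snd st)] [(j, t'), (i, fst st)])"
  shows "\<forall>i j. color k i \<and> color k j \<and> i \<noteq> j \<longrightarrow> coprime (n i) (n j)"
proof -
  have main: "coprime (n i) (n j)" if h: "color k i" "color k j" "i < j" for i j
  proof (rule ccontr)
    assume nc: "\<not> coprime (n i) (n j)"
    have ni: "n i > 0" and nj: "n j > 0" using h pos by auto
    define g where "g = gcd (n i) (n j)"
    have "g \<noteq> 1" using nc by (simp add: g_def coprime_iff_gcd_eq_1)
    moreover have "g > 0" using ni by (simp add: g_def)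
    ultimately have g1: "g > 1" by simp
    obtain a where a: "n i = g * a" unfolding g_def by (metis gcd_dvd1 dvdE)
    obtain b where b: "n j = g * b" unfolding g_def by (metis gcd_dvd2 dvdE)
    have a0: "a > 0" and b0: "b > 0" using a b ni nj by auto
    have al: "a < n i" using a g1 a0 by simp
    have bl: "b < n j" using b g1 b0 by simp
    have "\<exists>!st. fst st < n i \<and> snd st < n j \<and>
        Feq k n [(i, 0), (j, snd st)] [(j, 0), (i, fst st)]"
      using P2 h ni nj by blast
    then obtain st where uniq: "\<And>st'. fst st' < n i \<and> snd st' < n j \<and>
        Feq k n [(i, 0), (j, snd st')] [(j, 0), (i, fst st')] \<Longrightarrow> st' = st"
      by (auto elim: ex1E)
    have "Feq k n [(i, 0), (j, 0)] [(j, 0), (i, 0)]" using feq2 h ni nj by simp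
    then have "(0, 0) = st" using uniq ni nj by simp
    moreover have "n i * b = n j * a" using a b by simp
    then have "Feq k n [(i, 0), (j, b)] [(j, 0), (i, a)]" using feq2 h ni nj al bl by simp
    then have "(a, b) = st" using uniq al bl by simp
    ultimately have "a = 0" by (metis fst_conv)
    then show False using a0 by simp
  qed
  show ?thesis
  proof (intro allI impI)
    fix i j assume "color k i \<and> color k j \<and> i \<noteq> j"
    then show "coprime (n i) (n j)"
      using main[of i j] main[of j i] by (metis coprime_commute linorder_neqE_nat)
  qed
qed

lemma P4_P1:
  assumes P4: "right_LCM_monoid k n"
  shows "\<forall>i j. color k i \<and> color k j \<and> i \<noteq> j \<longrightarrow> coprime (n i) (n j)"
proof (intro allI impI, rule ccontr)
  fix i j assume h: "color k i \<and> color k j \<and> i \<noteq> j" and nc: "\<not> coprime (n i) (n j)"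
  have ni: "n i > 0" and nj: "n j > 0" using h pos by auto
  define g where "g = gcd (n i) (n j)"
  have "g \<noteq> 1" using nc by (simp add: g_def coprime_iff_gcd_eq_1)
  moreover have "g > 0" using ni by (simp add: g_def)
  ultimately have g1: "g > 1" by simp
  obtain a where a: "n i = g * a" unfolding g_def by (metis gcd_dvd1 dvdE)
  obtain b where b: "n j = g * b" unfolding g_def by (metis gcd_dvd2 dvdE)
  have a0: "a > 0" and b0: "b > 0" using a b ni nj by auto
  have bl: "b < n j" using b g1 b0 by simp
  have ab: "n i * b = n j * a" using a b by simp
  define \<mu> where "\<mu> = [(i, 0::nat)]"
  define \<nu> where "\<nu> = [(j, 0::nat)]"
  define c1 where "c1 = [(i, 0::nat), (j, 0)]"
  define c2 where "c2 = [(i, 0::nat), (j, b)]"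
  have v: "valid_word k n \<mu>" "valid_word k n \<nu>" "valid_word k n c1" "valid_word k n c2"
    using h ni nj bl by (auto simp: \<mu>_def \<nu>_def c1_def c2_def valid_Cons)
  have dg: "\<forall>x. deg \<mu> x \<le> deg c1 x" "\<forall>x. deg \<nu> x \<le> deg c1 x"
     "\<forall>x. deg \<mu> x \<le> deg c2 x" "\<forall>x. deg \<nu> x \<le> deg c2 x"
    by (auto simp: \<mu>_def \<nu>_def c1_def c2_def deg_Cons)
  have "wval n c2 mod n j = 0" using ab by (simp add: c2_def)
  then have cm1: "common_right_mult k n c1 \<mu> \<nu>" and cm2: "common_right_mult k n c2 \<mu> \<nu>"
    using v dg RM by (auto simp: common_right_mult_def \<mu>_def \<nu>_def c1_def c2_def)
  then obtain l where l: "is_right_lcm k n l \<mu> \<nu>"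
    using P4 v unfolding right_LCM_monoid_def by blast
  then have vl: "valid_word k n l" and r1: "right_mult k n c1 l" and r2: "right_mult k n c2 l"
    and lm: "right_mult k n l \<mu>" and ln: "right_mult k n l \<nu>"
    using cm1 cm2 by (auto simp: is_right_lcm_def common_right_mult_def)
  have d1: "\<forall>x. deg l x \<le> deg c1 x" and w1: "wval n c1 mod wN n l = wval n l"
    using RM[OF v(3) vl] r1 by auto
  have w2: "wval n c2 mod wN n l = wval n l" using RM[OF v(4) vl] r2 by auto
  have lb: "\<forall>x. deg \<mu> x \<le> deg l x" "\<forall>x. deg \<nu> x \<le> deg l x"
    using RM[OF vl v(1)] RM[OF vl v(2)] lm ln by auto
  have "deg l x = deg c1 x" for x using d1[rule_format, of x] h lb(1)[rule_format, of x] lb(2)[rule_format, of x]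
    by (cases "x = i"; cases "x = j") (auto simp: \<mu>_def \<nu>_def c1_def deg_Cons)
  then have "deg l = deg c1" by (simp add: fun_eq_iff)
  then have "wN n l = n i * n j" using deg_wN by (fastforce simp: c1_def)
  then have "wval n l = 0" using w1 by (simp add: c1_def)
  moreover have "wval n c2 < n i * n j" using bl ni by (simp add: c2_def)
  ultimately have "n i * b = 0" using w2 \<open>wN n l = n i * n j\<close> by (simp add: c2_def)
  then show False using ni b0 by simp
qed

lemma lcm_key:
  assumes P1: "\<forall>i j. color k i \<and> color k j \<and> i \<noteq> j \<longrightarrow> coprime (n i) (n j)"
    and v: "valid_word k n \<mu>" "valid_word k n \<nu>" "valid_word k n l"
    and dl: "deg l = (\<lambda>i. max (deg \<mu> i) (deg \<nu> i))"
  shows "\<exists>X Y. X dvd wN n \<mu> \<and> Y dvd wN n \<nu> \<and> coprime X Y \<and> wN n l = X * Y"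
proof -
  define S where "S = fst ` set \<mu> \<union> fst ` set \<nu> \<union> fst ` set l"
  have fS: "finite S" by (simp add: S_def)
  have cS: "\<And>i. i \<in> S \<Longrightarrow> color k i" using v by (auto simp: S_def valid_word_def)
  define A where "A = {i\<in>S. deg \<nu> i \<le> deg \<mu> i}"
  define B where "B = S - A"
  define X where "X = (\<Prod>i\<in>A. n i ^ deg \<mu> i)"
  define Y where "Y = (\<Prod>i\<in>B. n i ^ deg \<nu> i)"
  have AS: "A \<subseteq> S" by (auto simp: A_def)
  have wm: "wN n \<mu> = (\<Prod>i\<in>S. n i ^ deg \<mu> i)" by (rule wN_prod[OF fS]) (auto simp: S_def)
  have wn: "wN n \<nu> = (\<Prod>i\<in>S. n i ^ deg \<nu> i)" by (rule wN_prod[OF fS]) (auto simp: S_def)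
  have wl: "wN n l = (\<Prod>i\<in>S. n i ^ deg l i)" by (rule wN_prod[OF fS]) (auto simp: S_def)
  have "X dvd wN n \<mu>" unfolding wm X_def
    using prod.subset_diff[OF AS fS, of "\<lambda>i. n i ^ deg \<mu> i"] by simp
  moreover have "Y dvd wN n \<nu>" unfolding wn Y_def
    using prod.subset_diff[of B S "\<lambda>i. n i ^ deg \<nu> i"] fS by (simp add: B_def)
  moreover have "coprime X Y" unfolding X_def Y_def
  proof (intro prod_coprime_left prod_coprime_right)
    fix i j assume "i \<in> A" "j \<in> B"
    then have "i \<noteq> j" "color k i" "color k j" using cS by (auto simp: A_def B_def)
    then show "coprime (n i ^ deg \<mu> i) (n j ^ deg \<nu> j)" using P1 by simp
  qed
  moreover have "wN n l = X * Y"
  proof -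
    have "wN n l = (\<Prod>i\<in>S - A. n i ^ deg l i) * (\<Prod>i\<in>A. n i ^ deg l i)"
      unfolding wl using prod.subset_diff[OF AS fS] by simp
    also have "(\<Prod>i\<in>A. n i ^ deg l i) = X" unfolding X_def
      by (rule prod.cong) (auto simp: A_def dl)
    also have "(\<Prod>i\<in>S - A. n i ^ deg l i) = Y" unfolding Y_def B_def
      by (rule prod.cong) (auto simp: A_def dl)
    finally show ?thesis by simp
  qed
  ultimately show ?thesis by blast
qed

lemma P1_P3:
  assumes P1: "\<forall>i j. color k i \<and> color k j \<and> i \<noteq> j \<longrightarrow> coprime (n i) (n j)"
  shows "\<forall>\<mu> \<nu>. valid_word k n \<mu> \<and> valid_word k n \<nu> \<and> (\<exists>c. common_right_mult k n c \<mu> \<nu>) \<longrightarrow>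
               (\<exists>l. is_right_lcm k n l \<mu> \<nu> \<and> deg l = (\<lambda>i. max (deg \<mu> i) (deg \<nu> i)) \<and>
                   (\<forall>l'. is_right_lcm k n l' \<mu> \<nu> \<longrightarrow> Feq k n l' l))"
proof (intro allI impI)
  fix \<mu> \<nu>
  assume h: "valid_word k n \<mu> \<and> valid_word k n \<nu> \<and> (\<exists>c. common_right_mult k n c \<mu> \<nu>)"
  then have vm: "valid_word k n \<mu>" and vn: "valid_word k n \<nu>" by auto
  from h obtain c where c: "common_right_mult k n c \<mu> \<nu>" by blast
  then have vc: "valid_word k n c" by (simp add: common_right_mult_def)
  have cm: "(\<forall>i. deg \<mu> i \<le> deg c i) \<and> wval n c mod wN n \<mu> = wval n \<mu>"
    using c RM[OF vc vm] by (simp add: common_right_mult_def)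
  have cn: "(\<forall>i. deg \<nu> i \<le> deg c i) \<and> wval n c mod wN n \<nu> = wval n \<nu>"
    using c RM[OF vc vn] by (simp add: common_right_mult_def)
  define d where "d = (\<lambda>i. max (deg \<mu> i) (deg \<nu> i))"
  have "\<forall>i. d i \<le> deg c i" using cm cn by (simp add: d_def)
  then obtain l r where lr: "valid_word k n l" "valid_word k n r" "deg l = d" "Feq k n c (l@r)"
    using factor[OF vc] by blast
  have "right_mult k n c l" using lr by (auto simp: right_mult_def)
  then have cl: "wval n c mod wN n l = wval n l" using RM[OF vc lr(1)] by simp
  have dm: "\<forall>i. deg \<mu> i \<le> deg l i" and dn: "\<forall>i. deg \<nu> i \<le> deg l i" using lr(3) by (auto simp: d_def)
  have "wval n l mod wN n \<mu> = wval n \<mu>"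
    using cl cm deg_dvd[OF dm] by (metis mod_mod_cancel)
  then have lm: "right_mult k n l \<mu>" using RM[OF lr(1) vm] dm by simp
  have "wval n l mod wN n \<nu> = wval n \<nu>"
    using cl cn deg_dvd[OF dn] by (metis mod_mod_cancel)
  then have ln: "right_mult k n l \<nu>" using RM[OF lr(1) vn] dn by simp
  have com: "common_right_mult k n l \<mu> \<nu>" using lm ln lr by (simp add: common_right_mult_def)
  obtain X Y where XY: "X dvd wN n \<mu>" "Y dvd wN n \<nu>" "coprime X Y" "wN n l = X * Y"
    using lcm_key[OF P1 vm vn lr(1)] lr(3) d_def by blast
  have lcm: "is_right_lcm k n l \<mu> \<nu>"
    unfolding is_right_lcm_def
  proof (intro conjI allI impI com)
    fix c' assume c': "common_right_mult k n c' \<mu> \<nu>"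
    then have vc': "valid_word k n c'" by (simp add: common_right_mult_def)
    have c'm: "(\<forall>i. deg \<mu> i \<le> deg c' i) \<and> wval n c' mod wN n \<mu> = wval n \<mu>"
      using c' RM[OF vc' vm] by (simp add: common_right_mult_def)
    have c'n: "(\<forall>i. deg \<nu> i \<le> deg c' i) \<and> wval n c' mod wN n \<nu> = wval n \<nu>"
      using c' RM[OF vc' vn] by (simp add: common_right_mult_def)
    have "[wval n c' = wval n l] (mod wN n \<mu>)"
      using c'm \<open>wval n l mod wN n \<mu> = wval n \<mu>\<close> by (simp add: cong_def)
    then have 1: "[wval n c' = wval n l] (mod X)" using XY(1) by (rule cong_dvd_modulus_nat)
    have "[wval n c' = wval n l] (mod wN n \<nu>)"
      using c'n \<open>wval n l mod wN n \<nu> = wval n \<nu>\<close> by (simp add: cong_def)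
    then have 2: "[wval n c' = wval n l] (mod Y)" using XY(2) by (rule cong_dvd_modulus_nat)
    have "[wval n c' = wval n l] (mod wN n l)"
      using coprime_cong_mult_nat[OF 1 2 XY(3)] XY(4) by simp
    then have "wval n c' mod wN n l = wval n l" using valid_lt[OF lr(1)] by (simp add: cong_def)
    moreover have "\<forall>i. deg l i \<le> deg c' i" using c'm c'n lr(3) by (simp add: d_def)
    ultimately show "right_mult k n c' l" using RM[OF vc' lr(1)] by simp
  qed
  have uniq: "Feq k n l' l" if l': "is_right_lcm k n l' \<mu> \<nu>" for l'
  proof -
    have vl': "valid_word k n l'" using l' by (simp add: is_right_lcm_def common_right_mult_def)
    have "right_mult k n l' l" using l' lcm by (simp add: is_right_lcm_def)
    then have a: "(\<forall>i. deg l i \<le> deg l' i) \<and> wval n l' mod wN n l = wval n l" using RM[OF vl' lr(1)] by simp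
    have "right_mult k n l l'" using l' com by (simp add: is_right_lcm_def)
    then have b: "\<forall>i. deg l' i \<le> deg l i" using RM[OF lr(1) vl'] by simp
    have dd: "deg l' = deg l" using a b by (simp add: fun_eq_iff antisym)
    then have "wN n l' = wN n l" by (rule deg_wN)
    then have "wval n l' = wval n l" using a valid_lt[OF vl'] by simp
    then show ?thesis using complete vl' lr(1) dd by blast
  qed
  show "\<exists>l. is_right_lcm k n l \<mu> \<nu> \<and> deg l = (\<lambda>i. max (deg \<mu> i) (deg \<nu> i)) \<and>
                   (\<forall>l'. is_right_lcm k n l' \<mu> \<nu> \<longrightarrow> Feq k n l' l)"
    using lcm uniq lr(3) d_def by blast
qed

end

theorem mainTheorem5:
  fixes k :: enat and n :: "nat \<Rightarrow> nat"
  assumes "k \<ge> 1"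
    and "\<forall>i. color k i \<longrightarrow> n i > 0"
  defines "P1 \<equiv> (\<forall>i j. color k i \<and> color k j \<and> i \<noteq> j \<longrightarrow> coprime (n i) (n j))"
    and "P2 \<equiv> (\<forall>i j s t'. color k i \<and> color k j \<and> i < j \<and> s < n i \<and> t' < n j \<longrightarrow>
               (\<exists>!st. fst st < n i \<and> snd st < n j \<and>
                  Feq k n [(i, s), (j, snd st)] [(j, t'), (i, fst st)]))"
    and "P3 \<equiv> (\<forall>\<mu> \<nu>. valid_word k n \<mu> \<and> valid_word k n \<nu> \<and> (\<exists>c. common_right_mult k n c \<mu> \<nu>) \<longrightarrow>
               (\<exists>l. is_right_lcm k n l \<mu> \<nu> \<and> deg l = (\<lambda>i. max (deg \<mu> i) (deg \<nu> i)) \<and>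
                   (\<forall>l'. is_right_lcm k n l' \<mu> \<nu> \<longrightarrow> Feq k n l' l)))"
    and "P4 \<equiv> right_LCM_monoid k n"
  shows "(P1 \<longleftrightarrow> P2) \<and> (P2 \<longleftrightarrow> P3) \<and> (P3 \<longleftrightarrow> P4)"
proof -
  interpret odo k n using assms(2) by unfold_locales simp
  have 12: "P1 \<Longrightarrow> P2" unfolding P1_def P2_def by (rule P1_P2)
  have 21: "P2 \<Longrightarrow> P1" unfolding P1_def P2_def by (rule P2_P1)
  have 13: "P1 \<Longrightarrow> P3" unfolding P1_def P3_def by (rule P1_P3)
  have 34: "P3 \<Longrightarrow> P4" unfolding P3_def P4_def right_LCM_monoid_def by blast
  have 41: "P4 \<Longrightarrow> P1" unfolding P1_def P4_def by (rule P4_P1)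
  show ?thesis using 12 21 13 34 41 by blast
qed

end
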